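(* Let $G=G_{A,B}$ be a DSR graph (for some $A\in\mathbb{R}^{n\times m}$, $B\in\mathbb{R}^{m\times n}$) which is steady. Then every (nonempty) closed walk in $G$ is an s-walk.
   Context: DSR graphs: for $A\in\mathbb{R}^{n\times m}$, $B\in\mathbb{R}^{m\times n}$, $G_{A,B}$ is the signed, labelled bipartite digraph with S-vertices $S_1,\dots,S_n$ and R-vertices $R_1,\dots,R_m$, with an arc $R_j\to S_i$ of sign $\mathrm{sign}(A_{ij})$ iff $A_{ij}\ne0$ and an arc $S_i\to R_j$ of sign $\mathrm{sign}(B_{ji})$ iff $B_{ji}\ne0$; a pair of antiparallel arcs of the same sign is regarded as a single undirected edge, traversable in both directions. An edge arising from $A_{ij}\ne0$ (R-to-S or undirected) has label $|A_{ij}|$; an edge with only S-to-R orientation has label $\infty$. A walk is an alternating sequence of vertices and edges traversing each edge consistently with its orientation, with repetitions of vertices and edges allowed; it is closed if its first and last vertices coincide. A cycle is a nonempty closed walk that repeats no vertex except first$=$last (a 2-cycle requires two distinct edges between the same vertices). A closed walk $(e_1,\dots,e_{2r})$ is an s-walk if all its labels are finite and $\prod_{i=1}^r l(e_{2i-1})=\prod_{i=1}^r l(e_{2i})$; an s-cycle is a cycle that is an s-walk. $G$ is steady if all its cycles are s-cycles. *)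

theory Defs
  imports Main "HOL.Real"
begin

text \<open>DSR graph G_{A,B} for A (n x m) and B (m x n), matrices given as functions
  with explicit dimensions: A i j for i < n, j < m; B j i for j < m, i < n.\<close>

datatype vtx = S nat | R nat

text \<open>Edges between S_i and R_j: EA i j is the edge arising from A_ij \<noteq> 0
  (undirected if B_ji has the same nonzero sign, otherwise the arc R_j \<rightarrow> S_i);
  EB i j is the arc S_i \<rightarrow> R_j arising from B_ji \<noteq> 0 when it is not merged
  into an undirected edge.\<close>
datatype edge = EA nat nat | EB nat nat

definition undirected :: "(nat \<Rightarrow> nat \<Rightarrow> real) \<Rightarrow> (nat \<Rightarrow> nat \<Rightarrow> real) \<Rightarrow> nat \<Rightarrow> nat \<Rightarrow> bool" where
  "undirected A B i j \<longleftrightarrow> A i j \<noteq> 0 \<and> B j i \<noteq> 0 \<and> sgn (A i j) = sgn (B j i)"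

definition traverses ::
  "(nat \<Rightarrow> nat \<Rightarrow> real) \<Rightarrow> (nat \<Rightarrow> nat \<Rightarrow> real) \<Rightarrow> nat \<Rightarrow> nat \<Rightarrow> vtx \<Rightarrow> edge \<Rightarrow> vtx \<Rightarrow> bool" where
  "traverses A B n m u e v = (case e of
      EA i j \<Rightarrow> i < n \<and> j < m \<and> A i j \<noteq> 0 \<and>
                ((u = R j \<and> v = S i) \<or> (u = S i \<and> v = R j \<and> undirected A B i j))
    | EB i j \<Rightarrow> i < n \<and> j < m \<and> B j i \<noteq> 0 \<and> \<not> undirected A B i j \<and>
                u = S i \<and> v = R j)"

text \<open>Labels: None represents the label \<infinity>.\<close>
fun label :: "(nat \<Rightarrow> nat \<Rightarrow> real) \<Rightarrow> edge \<Rightarrow> real option" where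
  "label A (EA i j) = Some \<bar>A i j\<bar>"
| "label A (EB i j) = None"

definition is_walk ::
  "(nat \<Rightarrow> nat \<Rightarrow> real) \<Rightarrow> (nat \<Rightarrow> nat \<Rightarrow> real) \<Rightarrow> nat \<Rightarrow> nat \<Rightarrow> vtx list \<Rightarrow> edge list \<Rightarrow> bool" where
  "is_walk A B n m vs es \<longleftrightarrow> length vs = Suc (length es) \<and>
     (\<forall>t < length es. traverses A B n m (vs ! t) (es ! t) (vs ! Suc t))"

definition closed_walk ::
  "(nat \<Rightarrow> nat \<Rightarrow> real) \<Rightarrow> (nat \<Rightarrow> nat \<Rightarrow> real) \<Rightarrow> nat \<Rightarrow> nat \<Rightarrow> vtx list \<Rightarrow> edge list \<Rightarrow> bool" where
  "closed_walk A B n m vs es \<longleftrightarrow> is_walk A B n m vs es \<and> hd vs = last vs"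

text \<open>Cycle: nonempty closed walk repeating no vertex except first = last,
  with pairwise distinct edges (needed for 2-cycles, automatic otherwise).\<close>
definition is_cycle ::
  "(nat \<Rightarrow> nat \<Rightarrow> real) \<Rightarrow> (nat \<Rightarrow> nat \<Rightarrow> real) \<Rightarrow> nat \<Rightarrow> nat \<Rightarrow> vtx list \<Rightarrow> edge list \<Rightarrow> bool" where
  "is_cycle A B n m vs es \<longleftrightarrow> closed_walk A B n m vs es \<and> es \<noteq> [] \<and>
     distinct (tl vs) \<and> distinct es"

text \<open>s-walk: closed walk (e_1,...,e_{2r}), all labels finite, and the product of
  labels of e_1,e_3,... equals that of e_2,e_4,... (0-based: even vs odd positions).\<close>
definition s_walk ::
  "(nat \<Rightarrow> nat \<Rightarrow> real) \<Rightarrow> (nat \<Rightarrow> nat \<Rightarrow> real) \<Rightarrow> nat \<Rightarrow> nat \<Rightarrow> vtx list \<Rightarrow> edge list \<Rightarrow> bool" where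
  "s_walk A B n m vs es \<longleftrightarrow> closed_walk A B n m vs es \<and>
     (\<forall>e \<in> set es. label A e \<noteq> None) \<and>
     (\<Prod>t \<in> {t. t < length es \<and> even t}. the (label A (es ! t))) =
     (\<Prod>t \<in> {t. t < length es \<and> odd t}. the (label A (es ! t)))"

definition s_cycle ::
  "(nat \<Rightarrow> nat \<Rightarrow> real) \<Rightarrow> (nat \<Rightarrow> nat \<Rightarrow> real) \<Rightarrow> nat \<Rightarrow> nat \<Rightarrow> vtx list \<Rightarrow> edge list \<Rightarrow> bool" where
  "s_cycle A B n m vs es \<longleftrightarrow> is_cycle A B n m vs es \<and> s_walk A B n m vs es"

definition steady :: "(nat \<Rightarrow> nat \<Rightarrow> real) \<Rightarrow> (nat \<Rightarrow> nat \<Rightarrow> real) \<Rightarrow> nat \<Rightarrow> nat \<Rightarrow> bool" where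
  "steady A B n m \<longleftrightarrow> (\<forall>vs es. is_cycle A B n m vs es \<longrightarrow> s_cycle A B n m vs es)"

end

theory Submission
  imports Defs
begin

fun pe :: "(edge \<Rightarrow> real) \<Rightarrow> edge list \<Rightarrow> real" and po :: "(edge \<Rightarrow> real) \<Rightarrow> edge list \<Rightarrow> real" where
  "pe f [] = 1"
| "pe f (e # es) = f e * po f es"
| "po f [] = 1"
| "po f (e # es) = pe f es"

lemma prod_pe_po:
  "(\<Prod>t\<in>{t. t < length es \<and> even t}. f (es ! t)) = pe f es \<and>
   (\<Prod>t\<in>{t. t < length es \<and> odd t}. f (es ! t)) = po f es"
proof (induction es)
  case Nil
  then show ?case by simp
next
  case (Cons e es)
  have s1: "{t. t < length (e#es) \<and> even t} = insert 0 (Suc ` {t. t < length es \<and> odd t})"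
  proof (intro set_eqI iffI)
    fix x assume "x \<in> {t. t < length (e#es) \<and> even t}"
    then show "x \<in> insert 0 (Suc ` {t. t < length es \<and> odd t})"
      by (cases x) auto
  qed auto
  have s2: "{t. t < length (e#es) \<and> odd t} = Suc ` {t. t < length es \<and> even t}"
  proof (intro set_eqI iffI)
    fix x assume "x \<in> {t. t < length (e#es) \<and> odd t}"
    then show "x \<in> Suc ` {t. t < length es \<and> even t}"
      by (cases x) auto
  qed auto
  have f1: "finite (Suc ` {t. t < length es \<and> odd t})" by simp
  have "(\<Prod>t\<in>{t. t < length (e#es) \<and> even t}. f ((e#es) ! t))
        = f e * (\<Prod>t\<in>Suc ` {t. t < length es \<and> odd t}. f ((e#es) ! t))"
    unfolding s1 by (subst prod.insert[OF f1]) auto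
  also have "\<dots> = f e * (\<Prod>t\<in>{t. t < length es \<and> odd t}. f (es ! t))"
    by (subst prod.reindex) auto
  finally have a: "(\<Prod>t\<in>{t. t < length (e#es) \<and> even t}. f ((e#es) ! t)) = pe f (e#es)"
    using Cons by simp
  have "(\<Prod>t\<in>{t. t < length (e#es) \<and> odd t}. f ((e#es) ! t))
        = (\<Prod>t\<in>{t. t < length es \<and> even t}. f (es ! t))"
    unfolding s2 by (subst prod.reindex) auto
  then have b: "(\<Prod>t\<in>{t. t < length (e#es) \<and> odd t}. f ((e#es) ! t)) = po f (e#es)"
    using Cons by simp
  show ?case using a b by simp
qed

lemma pe_po_append:
  "pe f (xs @ ys) = pe f xs * (if even (length xs) then pe f ys else po f ys) \<and>
   po f (xs @ ys) = po f xs * (if even (length xs) then po f ys else pe f ys)"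
  by (induction xs) auto

fun isS :: "vtx \<Rightarrow> bool" where
  "isS (S _) = True" | "isS (R _) = False"

lemma trav_isS: "traverses A B n m u e v \<Longrightarrow> isS u \<noteq> isS v"
  by (auto simp: traverses_def split: edge.splits)

lemma trav_two: "traverses A B n m u e v \<Longrightarrow> traverses A B n m u' e v' \<Longrightarrow>
   (u = u' \<and> v = v') \<or> (u = v' \<and> v = u')"
  by (auto simp: traverses_def split: edge.splits)

lemma trav_back: "traverses A B n m u e v \<Longrightarrow> traverses A B n m v e u \<Longrightarrow> label A e \<noteq> None"
  by (auto simp: traverses_def split: edge.splits)

lemma walk_parity:
  assumes "is_walk A B n m vs es" "t < length vs"
  shows "isS (vs ! t) = (isS (vs ! 0) = even t)"
  using assms(2)
proof (induction t)
  case 0 then show ?case by simp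
next
  case (Suc t)
  have "traverses A B n m (vs ! t) (es ! t) (vs ! Suc t)"
    using assms(1) Suc.prems unfolding is_walk_def by auto
  then show ?case using trav_isS Suc by fastforce
qed

lemma walk_inner:
  assumes "is_walk A B n m vs es" "i \<le> j" "j \<le> length es"
  shows "is_walk A B n m (take (j-i+1) (drop i vs)) (take (j-i) (drop i es))"
  using assms unfolding is_walk_def by (auto simp: nth_take nth_drop)

lemma walk_cut:
  assumes "is_walk A B n m vs es" "i \<le> j" "j \<le> length es" "vs ! i = vs ! j"
  shows "is_walk A B n m (take i vs @ drop j vs) (take i es @ drop j es)"
  unfolding is_walk_def
proof (intro conjI allI impI)
  show "length (take i vs @ drop j vs) = Suc (length (take i es @ drop j es))"
    using assms unfolding is_walk_def by auto
next
  fix t assume t: "t < length (take i es @ drop j es)"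
  have L: "length vs = Suc (length es)" using assms unfolding is_walk_def by auto
  have W: "\<And>t. t < length es \<Longrightarrow> traverses A B n m (vs ! t) (es ! t) (vs ! Suc t)"
    using assms unfolding is_walk_def by auto
  consider "Suc t < i" | "Suc t = i" | "t \<ge> i" by linarith
  then show "traverses A B n m ((take i vs @ drop j vs) ! t) ((take i es @ drop j es) ! t)
        ((take i vs @ drop j vs) ! Suc t)"
  proof cases
    case 1 then show ?thesis using W[of t] assms L t by (auto simp: nth_append)
  next
    case 2 then show ?thesis using W[of t] assms L t by (auto simp: nth_append)
  next
    case 3
    then have "t - i + j < length es" using t assms L by auto
    moreover have e: "j + t - i = t - i + j" using 3 by auto
    ultimately have "traverses A B n m (vs ! (j + t - i)) (es ! (j + t - i)) (vs ! Suc (j + t - i))"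
      using W[of "t - i + j"] by simp
    then show ?thesis using 3 assms L t
      by (auto simp: nth_append Suc_diff_le)
  qed
qed


lemma tl_distinct_idx:
  assumes "distinct (tl vs)" "1 \<le> p" "p < length vs" "1 \<le> q" "q < length vs" "vs ! p = vs ! q"
  shows "p = q"
proof -
  have "tl vs ! (p - 1) = tl vs ! (q - 1)" using assms by (simp add: nth_tl)
  then have "p - 1 = q - 1" using assms nth_eq_iff_index_eq[of "tl vs" "p - 1" "q - 1"] by simp
  then show ?thesis using assms by simp
qed

lemma s_walk_iff:
  "s_walk A B n m vs es \<longleftrightarrow> closed_walk A B n m vs es \<and> (\<forall>e\<in>set es. label A e \<noteq> None) \<and>
     pe (\<lambda>e. the (label A e)) es = po (\<lambda>e. the (label A e)) es"
  unfolding s_walk_def using prod_pe_po[of "\<lambda>e. the (label A e)" es] by simp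

lemma main:
  "closed_walk A B n m vs es \<Longrightarrow> es \<noteq> [] \<Longrightarrow> steady A B n m \<Longrightarrow> s_walk A B n m vs es"
proof (induction "length es" arbitrary: vs es rule: less_induct)
  case less
  define f where "f = (\<lambda>e. the (label A e))"
  define k where "k = length es"
  have W: "is_walk A B n m vs es" using less.prems unfolding closed_walk_def by auto
  have L: "length vs = Suc k" using W unfolding is_walk_def k_def by auto
  have T: "\<And>t. t < k \<Longrightarrow> traverses A B n m (vs ! t) (es ! t) (vs ! Suc t)"
    using W unfolding is_walk_def k_def by auto
  have C: "vs ! 0 = vs ! k" using less.prems L unfolding closed_walk_def
    by (metis hd_conv_nth last_conv_nth diff_Suc_1 list.size(3) nat.distinct(1))
  have kpos: "k > 0" using less.prems k_def by auto
  show ?case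
  proof (cases "distinct (tl vs)")
    case False
    then obtain p q where pq: "p < q" "q < length (tl vs)" "tl vs ! p = tl vs ! q"
      unfolding distinct_conv_nth by (metis linorder_neqE_nat)
    define i where "i = Suc p"
    define j where "j = Suc q"
    have ij: "1 \<le> i" "i < j" "j \<le> k" "vs ! i = vs ! j"
      using pq L by (auto simp: i_def j_def nth_tl)
    define vs1 where "vs1 = take (j-i+1) (drop i vs)"
    define es1 where "es1 = take (j-i) (drop i es)"
    define vs2 where "vs2 = take i vs @ drop j vs"
    define es2 where "es2 = take i es @ drop j es"
    have W1: "is_walk A B n m vs1 es1" unfolding vs1_def es1_def
      using walk_inner[OF W, of i j] ij k_def by auto
    have W2: "is_walk A B n m vs2 es2" unfolding vs2_def es2_def
      using walk_cut[OF W, of i j] ij k_def by auto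
    have len1: "length es1 = j - i" using ij k_def es1_def by auto
    have len2: "length es2 = k - (j - i)" using ij k_def es2_def by auto
    have "hd vs1 = vs ! i" using ij L unfolding vs1_def by (simp add: hd_drop_conv_nth)
    moreover have "last vs1 = vs ! j" using ij L unfolding vs1_def
      by (simp add: last_conv_nth)
    ultimately have CW1: "closed_walk A B n m vs1 es1" using W1 ij unfolding closed_walk_def by simp
    have "hd vs2 = vs ! 0" using ij L unfolding vs2_def by (simp add: hd_conv_nth nth_append)
    moreover have "last vs2 = vs ! k"
    proof -
      have "drop j vs \<noteq> []" using ij L by simp
      then have "last vs2 = last vs" unfolding vs2_def by (simp add: last_append last_drop)
      also have "\<dots> = vs ! k" using L last_conv_nth[of vs] by (metis diff_Suc_1 list.size(3) nat.distinct(1))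
      finally show ?thesis .
    qed
    ultimately have CW2: "closed_walk A B n m vs2 es2" using W2 C unfolding closed_walk_def by simp
    have S1: "s_walk A B n m vs1 es1"
    proof -
      have "length es1 < length es" "es1 \<noteq> []" using len1 ij k_def by auto
      then show ?thesis using less.hyps[OF _ CW1 _ less.prems(3)] by auto
    qed
    have S2: "s_walk A B n m vs2 es2"
      proof -
      have "length es2 < length es" "es2 \<noteq> []" using len2 ij k_def by auto
      then show ?thesis using less.hyps[OF _ CW2 _ less.prems(3)] by auto
    qed
    have par: "even (j - i)"
    proof -
      have "isS (vs ! i) = (isS (vs ! 0) = even i)" using walk_parity[OF W, of i] ij L by auto
      moreover have "isS (vs ! j) = (isS (vs ! 0) = even j)" using walk_parity[OF W, of j] ij L by auto
      ultimately have "even i = even j" using ij by auto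
      then show ?thesis using ij by auto
    qed
    have esplit: "es = take i es @ es1 @ drop j es"
    proof -
      have "drop (j - i) (drop i es) = drop j es" using ij by simp
      then show ?thesis unfolding es1_def by (metis append_take_drop_id)
    qed
    have lab: "\<forall>e\<in>set es. label A e \<noteq> None"
    proof -
      have "set es = set (take i es @ es1 @ drop j es)" by (rule arg_cong[OF esplit])
      then have "set es \<subseteq> set es1 \<union> set es2" unfolding es2_def by auto
      then show ?thesis using S1 S2 unfolding s_walk_iff by blast
    qed
    have P1: "pe f es1 = po f es1" using S1 unfolding s_walk_iff f_def by blast
    have P2: "pe f es2 = po f es2" using S2 unfolding s_walk_iff f_def by blast
    have li: "length (take i es) = i" using ij k_def by auto
    have "pe f es = pe f (take i es @ es1 @ drop j es)" by (rule arg_cong[OF esplit])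
    also have "\<dots> = pe f (take i es) * (if even i then pe f (es1 @ drop j es) else po f (es1 @ drop j es))"
      using pe_po_append[of f "take i es" "es1 @ drop j es"] li by simp
    also have "\<dots> = pe f (take i es) * (if even i then pe f es1 * pe f (drop j es)
                 else po f es1 * po f (drop j es))"
      using pe_po_append[of f es1 "drop j es"] len1 par by simp
    finally have E1: "pe f es = pe f es1 * pe f es2"
      unfolding es2_def using pe_po_append[of f "take i es" "drop j es"] li P1 by simp
    have "po f es = po f (take i es @ es1 @ drop j es)" by (rule arg_cong[OF esplit])
    also have "\<dots> = po f (take i es) * (if even i then po f (es1 @ drop j es) else pe f (es1 @ drop j es))"
      using pe_po_append[of f "take i es" "es1 @ drop j es"] li by simp
    also have "\<dots> = po f (take i es) * (if even i then po f es1 * po f (drop j es)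
                 else pe f es1 * pe f (drop j es))"
      using pe_po_append[of f es1 "drop j es"] len1 par by simp
    finally have E2: "po f es = po f es1 * po f es2"
      unfolding es2_def using pe_po_append[of f "take i es" "drop j es"] li P1 by simp
    show ?thesis unfolding s_walk_iff using less.prems(1) lab E1 E2 P1 P2 f_def by simp
  next
    case dtl: True
    show ?thesis
    proof (cases "distinct es")
      case True
      then have "is_cycle A B n m vs es" using dtl less.prems unfolding is_cycle_def by auto
      then show ?thesis using less.prems(3) unfolding steady_def s_cycle_def by auto
    next
      case False
      then obtain a b where ab: "a < b" "b < k" "es ! a = es ! b"
        unfolding distinct_conv_nth k_def by (metis linorder_neqE_nat)
      have D: "\<And>p q. 1 \<le> p \<Longrightarrow> p \<le> k \<Longrightarrow> 1 \<le> q \<Longrightarrow> q \<le> k \<Longrightarrow> vs ! p = vs ! q \<Longrightarrow> p = q"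
        using tl_distinct_idx[OF dtl] L by auto
      have Ta: "traverses A B n m (vs ! a) (es ! a) (vs ! Suc a)" using T[of a] ab(1,2) by auto
      have Tb: "traverses A B n m (vs ! b) (es ! a) (vs ! Suc b)" using T ab by auto
      have "vs ! Suc a \<noteq> vs ! Suc b" using D[of "Suc a" "Suc b"] ab by auto
      then have o: "vs ! a = vs ! Suc b" "vs ! Suc a = vs ! b" using trav_two[OF Ta Tb] by auto
      have b1: "b = Suc a" using D[of "Suc a" b] o ab by auto
      have a0: "a = 0"
      proof (rule ccontr)
        assume "a \<noteq> 0"
        then show False using D[of a "Suc b"] o ab b1 by auto
      qed
      have k2: "k = 2"
      proof (rule ccontr)
        assume "k \<noteq> 2"
        then show False using D[of "Suc (Suc 0)" k] o ab b1 a0 C by (auto simp: numeral_2_eq_2)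
      qed
      obtain e where ee: "e = es ! 0" by simp
      have es2: "es = [e, e]" using k2 ab a0 b1 k_def ee
        by (metis One_nat_def Suc_1 length_0_conv length_Suc_conv nth_Cons_0 nth_Cons_Suc)
      have "label A e \<noteq> None"
      proof -
        have "traverses A B n m (vs ! Suc a) (es ! a) (vs ! a)" using Tb o(1) b1 by metis
        then have "label A (es ! a) \<noteq> None" using trav_back[OF Ta] by blast
        then show ?thesis using a0 ee by blast
      qed
      then have "\<forall>e\<in>set es. label A e \<noteq> None" unfolding es2 by simp
      moreover have "pe f es = po f es" unfolding es2 by simp
      ultimately show ?thesis unfolding s_walk_iff f_def using less.prems by simp
    qed
  qed
qed

theorem lemma2p7:
  fixes A B :: "nat \<Rightarrow> nat \<Rightarrow> real" and n m :: nat
  assumes "steady A B n m"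
    and "closed_walk A B n m vs es"
    and "es \<noteq> []"
  shows "s_walk A B n m vs es"
  using main assms by blast

end
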